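(* Every orientation of a chordal graph has at most one kernel.
   Context: A graph is chordal if it has no induced cycle of length $4$ or more. An orientation of a graph orients each edge in exactly one direction (not necessarily clique-acyclic). A kernel of a digraph $D=(V,A)$ is a set $S$ of pairwise non-adjacent vertices such that every $u\in V\setminus S$ has an arc $(u,v)\in A$ with $v\in S$. *)

theory Defs
  imports Main
begin

definition simple_graph :: "'a set \<Rightarrow> ('a \<Rightarrow> 'a \<Rightarrow> bool) \<Rightarrow> bool" where
  "simple_graph V E \<longleftrightarrow> finite V \<and> (\<forall>u v. E u v \<longrightarrow> u \<in> V \<and> v \<in> V)
     \<and> (\<forall>u v. E u v \<longrightarrow> E v u) \<and> (\<forall>v. \<not> E v v)"

definition induced_cycle :: "'a set \<Rightarrow> ('a \<Rightarrow> 'a \<Rightarrow> bool) \<Rightarrow> 'a list \<Rightarrow> bool" where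
  "induced_cycle V E cs \<longleftrightarrow> length cs \<ge> 3 \<and> distinct cs \<and> set cs \<subseteq> V \<and>
     (\<forall>i < length cs. \<forall>j < length cs.
        E (cs ! i) (cs ! j) \<longleftrightarrow> (j = (i + 1) mod length cs \<or> i = (j + 1) mod length cs))"

definition chordal :: "'a set \<Rightarrow> ('a \<Rightarrow> 'a \<Rightarrow> bool) \<Rightarrow> bool" where
  "chordal V E \<longleftrightarrow> (\<forall>cs. induced_cycle V E cs \<longrightarrow> length cs < 4)"

definition orientation :: "'a set \<Rightarrow> ('a \<Rightarrow> 'a \<Rightarrow> bool) \<Rightarrow> ('a \<Rightarrow> 'a \<Rightarrow> bool) \<Rightarrow> bool" where
  "orientation V E A \<longleftrightarrow> (\<forall>u v. A u v \<longrightarrow> E u v) \<and>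
     (\<forall>u v. E u v \<longrightarrow> (A u v \<longleftrightarrow> \<not> A v u))"

definition kernel :: "'a set \<Rightarrow> ('a \<Rightarrow> 'a \<Rightarrow> bool) \<Rightarrow> 'a set \<Rightarrow> bool" where
  "kernel V A S \<longleftrightarrow> S \<subseteq> V \<and> (\<forall>u\<in>S. \<forall>v\<in>S. \<not> A u v) \<and>
     (\<forall>u \<in> V - S. \<exists>v\<in>S. A u v)"

end

theory Submission
  imports Defs
begin


definition dcyc :: "'a set \<Rightarrow> ('a \<Rightarrow> 'a \<Rightarrow> bool) \<Rightarrow> 'a list \<Rightarrow> bool" where
  "dcyc D R cs \<longleftrightarrow> cs \<noteq> [] \<and> distinct cs \<and> set cs \<subseteq> D \<and>
     (\<forall>m < length cs. R (cs ! m) (cs ! ((m + 1) mod length cs)))"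

lemma walk_exists:
  assumes "x \<in> D" "\<forall>u\<in>D. \<exists>v\<in>D. R u v"
  shows "\<exists>f. f 0 = x \<and> (\<forall>k. f k \<in> D \<and> R (f k) (f (Suc k)))"
proof -
  obtain g where g: "\<forall>u\<in>D. g u \<in> D \<and> R u (g u)" using assms(2) by metis
  define f where "f = (\<lambda>k. (g ^^ k) x)"
  have "\<forall>k. f k \<in> D \<and> R (f k) (f (Suc k))"
  proof
    fix k
    have "f k \<in> D" by (induction k) (auto simp: f_def assms(1) g)
    then show "f k \<in> D \<and> R (f k) (f (Suc k))" using g by (simp add: f_def)
  qed
  moreover have "f 0 = x" by (simp add: f_def)
  ultimately show ?thesis by blast
qed

lemma cycle_exists:
  assumes "finite D" "x \<in> D" "\<forall>u\<in>D. \<exists>v\<in>D. R u v"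
  shows "\<exists>cs. dcyc D R cs"
proof -
  obtain f where f0: "f 0 = x" and f: "\<And>k. f k \<in> D \<and> R (f k) (f (Suc k))"
    using walk_exists[OF assms(2,3)] by blast
  have "\<not> inj f"
  proof
    assume "inj f"
    then have "infinite (range f)" using finite_imageD by blast
    moreover have "range f \<subseteq> D" using f by auto
    ultimately show False using assms(1) finite_subset by auto
  qed
  then obtain a b where ab: "a \<noteq> b" "f a = f b" unfolding inj_def by blast
  have "\<exists>j. \<exists>i<j. f i = f j"
  proof (cases "a < b")
    case True then show ?thesis using ab by blast
  next
    case False then have "b < a" using ab by simp
    then show ?thesis using ab by metis
  qed
  then obtain j where j: "\<exists>i<j. f i = f j" and jmin: "\<And>j'. j' < j \<Longrightarrow> \<not> (\<exists>i<j'. f i = f j')"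
    using exists_least_iff[of "\<lambda>j. \<exists>i<j. f i = f j"] by blast
  then obtain i where ij: "i < j" "f i = f j" by blast
  define cs where "cs = map f [i..<j]"
  have len: "length cs = j - i" by (simp add: cs_def)
  have nth: "\<And>m. m < j - i \<Longrightarrow> cs ! m = f (i + m)" by (simp add: cs_def)
  have "inj_on f {i..<j}"
  proof (rule inj_onI)
    fix a b assume a: "a \<in> {i..<j}" and b: "b \<in> {i..<j}" and fab: "f a = f b"
    show "a = b"
    proof (rule ccontr)
      assume "a \<noteq> b"
      then consider "a < b" | "b < a" by linarith
      then show False
      proof cases
        case 1 then show False using jmin[of b] b fab by auto
      next
        case 2 then show False using jmin[of a] a fab by auto
      qed
    qed
  qed
  then have "distinct cs" by (simp add: cs_def distinct_map)
  moreover have "cs \<noteq> []" using ij by (simp add: cs_def)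
  moreover have "set cs \<subseteq> D" using f by (auto simp: cs_def)
  moreover have "\<forall>m < length cs. R (cs ! m) (cs ! ((m + 1) mod length cs))"
  proof (intro allI impI)
    fix m assume m: "m < length cs"
    show "R (cs ! m) (cs ! ((m + 1) mod length cs))"
    proof (cases "m + 1 < j - i")
      case True
      then have "cs ! ((m + 1) mod length cs) = f (Suc (i + m))" using nth len by simp
      moreover have "cs ! m = f (i + m)" using nth len m by simp
      ultimately show ?thesis using f[of "i+m"] by simp
    next
      case False
      then have mm: "m + 1 = j - i" using m len by simp
      then have "(m + 1) mod length cs = 0" using len by simp
      moreover have "cs ! 0 = f j" using nth[of 0] ij by simp
      moreover have "Suc (i + m) = j" using mm ij by linarith
      then have "f (Suc (i + m)) = f j" by simp
      moreover have "cs ! m = f (i + m)" using nth len m by simp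
      ultimately show ?thesis using f[of "i+m"] by simp
    qed
  qed
  ultimately show ?thesis unfolding dcyc_def by blast
qed



lemma shortcut:
  assumes c: "dcyc D R cs" and n: "n = length cs" and i: "i < n" and j: "j < n"
    and a: "R (cs ! i) (cs ! j)" and ne: "j \<noteq> (i + 1) mod n" and ij: "i \<noteq> j"
  shows "\<exists>cs'. dcyc D R cs' \<and> length cs' < n"
proof -
  define d where "d = (i + n - j) mod n"
  define k where "k = d + 1"
  define cs' where "cs' = take k (rotate j cs)"
  have dn: "d < n" using i by (simp add: d_def)
  have last: "(j + d) mod n = i"
  proof -
    have "(j + d) mod n = (j + (i + n - j)) mod n" unfolding d_def by (rule mod_add_right_eq)
    also have "j + (i + n - j) = i + n" using j by simp
    finally show ?thesis using i by simp
  qed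
  have "d \<noteq> n - 1"
  proof
    assume "d = n - 1"
    then have "(j + d) mod n = (j + n - 1) mod n" using i by simp
    moreover have "(j + d) mod n = i" by (rule last)
    ultimately have "i = (j + n - 1) mod n" by simp
    then have "(i + 1) mod n = ((j + n - 1) mod n + 1) mod n" by simp
    also have "\<dots> = (j + n - 1 + 1) mod n" by (simp add: mod_simps)
    also have "j + n - 1 + 1 = j + n" using i by simp
    finally have "(i + 1) mod n = j" using j by simp
    then show False using ne by simp
  qed
  then have kn: "k < n" using dn by (simp add: k_def)
  have lk: "length cs' = k" using kn n by (simp add: cs'_def)
  have el: "\<And>m. m < k \<Longrightarrow> cs' ! m = cs ! ((j + m) mod n)"
    using kn n by (simp add: cs'_def nth_rotate)
  have cs: "distinct cs" "set cs \<subseteq> D" "\<And>m. m < n \<Longrightarrow> R (cs ! m) (cs ! ((m + 1) mod n))"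
    using c n unfolding dcyc_def by auto
  have "dcyc D R cs'"
    unfolding dcyc_def
  proof (intro conjI allI impI)
    show "cs' \<noteq> []" using lk k_def by auto
    show "distinct cs'" using cs by (simp add: cs'_def)
    show "set cs' \<subseteq> D" using cs set_take_subset[of k "rotate j cs"] by (auto simp: cs'_def)
    fix m assume m: "m < length cs'"
    show "R (cs' ! m) (cs' ! ((m + 1) mod length cs'))"
    proof (cases "m + 1 < k")
      case True
      have "R (cs ! ((j + m) mod n)) (cs ! (((j + m) mod n + 1) mod n))"
        using cs(3) i by simp
      moreover have "((j + m) mod n + 1) mod n = (j + (m + 1)) mod n"
        by (simp add: mod_simps)
      ultimately show ?thesis using True el lk m by simp
    next
      case False
      then have "m = d" using m lk k_def by simp
      then have "cs' ! m = cs ! i" using el last m lk by simp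
      moreover have "m + 1 = length cs'" using False m lk by simp
      then have "(m + 1) mod length cs' = 0" by simp
      moreover have "cs' ! 0 = cs ! j" using el[of 0] j k_def by simp
      ultimately show ?thesis using a by simp
    qed
  qed
  then show ?thesis using lk kn by blast
qed

theorem proposition3:
  fixes V :: "'a set" and E A :: "'a \<Rightarrow> 'a \<Rightarrow> bool" and S T :: "'a set"
  assumes "simple_graph V E" and "chordal V E" and "orientation V E A"
    and "kernel V A S" and "kernel V A T"
  shows "S = T"
proof (rule ccontr)
  assume neq: "S \<noteq> T"
  have fin: "finite V" and irr: "\<And>v. \<not> E v v" and sym: "\<And>u v. E u v \<Longrightarrow> E v u"
    using assms(1) unfolding simple_graph_def by auto
  have AE: "\<And>u v. A u v \<Longrightarrow> E u v" and or: "\<And>u v. E u v \<Longrightarrow> (A u v \<longleftrightarrow> \<not> A v u)"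
    using assms(3) unfolding orientation_def by auto
  have S: "S \<subseteq> V" "\<And>u v. u \<in> S \<Longrightarrow> v \<in> S \<Longrightarrow> \<not> A u v" "\<And>u. u \<in> V - S \<Longrightarrow> \<exists>v\<in>S. A u v"
    using assms(4) unfolding kernel_def by auto
  have T: "T \<subseteq> V" "\<And>u v. u \<in> T \<Longrightarrow> v \<in> T \<Longrightarrow> \<not> A u v" "\<And>u. u \<in> V - T \<Longrightarrow> \<exists>v\<in>T. A u v"
    using assms(5) unfolding kernel_def by auto
  define D where "D = (S - T) \<union> (T - S)"
  have DV: "D \<subseteq> V" using S(1) T(1) by (auto simp: D_def)
  have finD: "finite D" using DV fin finite_subset by auto
  obtain x where x: "x \<in> D" using neq by (auto simp: D_def)
  have flip: "\<And>u v. u \<in> D \<Longrightarrow> v \<in> D \<Longrightarrow> A u v \<Longrightarrow> (u \<in> S \<longleftrightarrow> v \<notin> S)"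
    using S(2) T(2) by (auto simp: D_def)
  have out: "\<forall>u\<in>D. \<exists>v\<in>D. A u v"
  proof
    fix u assume u: "u \<in> D"
    show "\<exists>v\<in>D. A u v"
    proof (cases "u \<in> S")
      case True
      then have "u \<in> V - T" using u S(1) by (auto simp: D_def)
      then obtain v where "v \<in> T" "A u v" using T(3) by blast
      moreover have "v \<notin> S" using S(2) True \<open>A u v\<close> by blast
      ultimately show ?thesis by (auto simp: D_def)
    next
      case False
      then have "u \<in> V - S" using u DV by auto
      then obtain v where "v \<in> S" "A u v" using S(3) by blast
      moreover have "v \<notin> T" using T(2) False u \<open>A u v\<close> by (auto simp: D_def)
      ultimately show ?thesis by (auto simp: D_def)
    qed
  qed
  obtain cs0 where "dcyc D A cs0" using cycle_exists[OF finD x out] by blast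
  then obtain cs where cs: "dcyc D A cs" and mincs: "\<And>cs'. dcyc D A cs' \<Longrightarrow> length cs \<le> length cs'"
    using ex_has_least_nat[of "dcyc D A" cs0 length] by blast
  define n where "n = length cs"
  have ne: "cs \<noteq> []" and dist: "distinct cs" and sD: "set cs \<subseteq> D"
    and arc: "\<And>m. m < n \<Longrightarrow> A (cs ! m) (cs ! ((m + 1) mod n))"
    using cs unfolding dcyc_def n_def by auto
  have inD: "\<And>m. m < n \<Longrightarrow> cs ! m \<in> D" using sD n_def by auto
  have n1: "n \<ge> 1" using ne n_def by (cases cs) auto
  have "n \<noteq> 1"
  proof
    assume "n = 1"
    then have "A (cs ! 0) (cs ! 0)" using arc[of 0] by simp
    then show False using AE irr by blast
  qed
  moreover have "n \<noteq> 2"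
  proof
    assume "n = 2"
    then have "A (cs ! 0) (cs ! 1)" "A (cs ! 1) (cs ! 0)" using arc[of 0] arc[of 1] by simp_all
    then show False using AE or by blast
  qed
  moreover have "n \<noteq> 3"
  proof
    assume n3: "n = 3"
    then have "A (cs ! 0) (cs ! 1)" "A (cs ! 1) (cs ! 2)" "A (cs ! 2) (cs ! 0)"
      using arc[of 0] arc[of 1] arc[of 2] by (simp_all add: numeral_2_eq_2)
    moreover have "cs ! 0 \<in> D" "cs ! 1 \<in> D" "cs ! 2 \<in> D" using inD[of 0] inD[of 1] inD[of 2] n3 by auto
    ultimately show False using flip by blast
  qed
  ultimately have n4: "n \<ge> 4" using n1 by linarith
  have "induced_cycle V E cs"
    unfolding induced_cycle_def
  proof (intro conjI allI impI)
    show "3 \<le> length cs" using n4 n_def by simp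
    show "distinct cs" by (rule dist)
    show "set cs \<subseteq> V" using sD DV by auto
    fix i j assume i: "i < length cs" and j: "j < length cs"
    show "E (cs ! i) (cs ! j) \<longleftrightarrow> (j = (i + 1) mod length cs \<or> i = (j + 1) mod length cs)"
    proof
      assume e: "E (cs ! i) (cs ! j)"
      have ij: "i \<noteq> j" using e irr by auto
      show "j = (i + 1) mod length cs \<or> i = (j + 1) mod length cs"
      proof (rule ccontr)
        assume nn: "\<not> (j = (i + 1) mod length cs \<or> i = (j + 1) mod length cs)"
        have "A (cs ! i) (cs ! j) \<or> A (cs ! j) (cs ! i)" using or[OF e] by blast
        then obtain cs' where "dcyc D A cs'" "length cs' < length cs"
        proof
          assume "A (cs ! i) (cs ! j)"
          then show ?thesis using shortcut[OF cs refl i j _ _ ij] nn that by blast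
        next
          assume "A (cs ! j) (cs ! i)"
          then show ?thesis using shortcut[OF cs refl j i _ _ ij[symmetric]] nn that by blast
        qed
        then show False using mincs by fastforce
      qed
    next
      assume "j = (i + 1) mod length cs \<or> i = (j + 1) mod length cs"
      then show "E (cs ! i) (cs ! j)"
      proof
        assume "j = (i + 1) mod length cs"
        then show ?thesis using arc[of i] i AE n_def by simp
      next
        assume "i = (j + 1) mod length cs"
        then have "E (cs ! j) (cs ! i)" using arc[of j] j AE n_def by simp
        then show ?thesis using sym by blast
      qed
    qed
  qed
  then have "length cs < 4" using assms(2) unfolding chordal_def by blast
  then show False using n4 n_def by simp
qed

end
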